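(* Let $a<b$ and $c<d$ be real numbers, and let $f,g:[a,b]\times[c,d]\to\mathbb{R}$ be continuous functions whose first partial derivatives $D_1 f, D_2 f, D_1 g, D_2 g$ and mixed second partial derivatives $D_2D_1 f$, $D_2 D_1 g$ exist and are continuous on $[a,b]\times[c,d]$. For $h\in\{f,g\}$ and $(x,y)\in[a,b]\times[c,d]$ define \[ P(h(x,y))=\frac12\big[h(x,c)+h(x,d)+h(a,y)+h(b,y)\big]-\frac14\big[h(a,c)+h(a,d)+h(b,c)+h(b,d)\big]. \] Then \[ \left|\int_a^b\int_c^d\Big[f(x,y)g(x,y)-\frac12\big(P(f(x,y))\,g(x,y)+P(g(x,y))\,f(x,y)\big)\Big]\,dy\,dx\right| \le \frac18(b-a)(d-c)\int_a^b\int_c^d\Big[|g(x,y)|\,\|D_2D_1 f\|_\infty+|f(x,y)|\,\|D_2D_1 g\|_\infty\Big]\,dy\,dx . \]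
   Context: $D_1$ and $D_2$ denote partial differentiation with respect to the first and second variable respectively, so $D_2D_1 f=\frac{\partial}{\partial y}\frac{\partial f}{\partial x}$. For a function $h$ on $[a,b]\times[c,d]$, $\|h\|_\infty=\sup_{(x,y)\in[a,b]\times[c,d]}|h(x,y)|$. *)

theory Defs
  imports "HOL-Analysis.Analysis"
begin

definition P_op :: "real \<Rightarrow> real \<Rightarrow> real \<Rightarrow> real \<Rightarrow> (real \<Rightarrow> real \<Rightarrow> real) \<Rightarrow> real \<Rightarrow> real \<Rightarrow> real" where
  "P_op a b c d h x y =
     (1/2) * (h x c + h x d + h a y + h b y)
     - (1/4) * (h a c + h a d + h b c + h b d)"

definition sup_norm_rect :: "real \<Rightarrow> real \<Rightarrow> real \<Rightarrow> real \<Rightarrow> (real \<Rightarrow> real \<Rightarrow> real) \<Rightarrow> real" where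
  "sup_norm_rect a b c d h = (SUP p \<in> {a..b} \<times> {c..d}. \<bar>h (fst p) (snd p)\<bar>)"

end

theory Submission
  imports Defs
begin

lemma four_abs:
  fixes A B C D A' B' C' D' :: real
  assumes "\<bar>A\<bar> \<le> A'" "\<bar>B\<bar> \<le> B'" "\<bar>C\<bar> \<le> C'" "\<bar>D\<bar> \<le> D'"
  shows "\<bar>(1/4) * (A + B + C + D)\<bar> \<le> (1/4) * (A' + B' + C' + D')"
  using assms by (simp add: abs_mult)

lemma two_abs:
  fixes F p q P Q :: real
  assumes "\<bar>F\<bar> \<le> (1/2) * (p + q)" "p \<le> P" "q \<le> Q"
  shows "\<bar>F\<bar> \<le> (1/2) * (P + Q)"
proof -
  have "(1/2) * (p + q) \<le> (1/2) * (P + Q)" using add_mono[OF assms(2,3)] by simp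
  then show ?thesis using assms(1) by (rule order_trans[rotated])
qed

lemma mvt_abs2:
  fixes \<phi> \<phi>' :: "real \<Rightarrow> real"
  assumes der: "\<And>t. t \<in> {u..v} \<Longrightarrow> (\<phi> has_real_derivative \<phi>' t) (at t within {u..v})"
    and bd: "\<And>t. t \<in> {u..v} \<Longrightarrow> \<bar>\<phi>' t\<bar> \<le> K"
    and x: "x \<in> {u..v}" and z: "z \<in> {u..v}"
  shows "\<bar>\<phi> x - \<phi> z\<bar> \<le> K * \<bar>x - z\<bar>"
proof -
  have gen: "\<bar>\<phi> q - \<phi> p\<bar> \<le> K * (q - p)" if "p \<le> q" "p \<in> {u..v}" "q \<in> {u..v}" for p q
  proof -
    have sub: "{p..q} \<subseteq> {u..v}" using that by auto
    have "\<exists>s\<in>{p..q}. \<phi> q - \<phi> p = (\<lambda>h. \<phi>' s * h) (q - p)"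
    proof (rule mvt_very_simple[OF \<open>p \<le> q\<close>])
      fix s assume "p \<le> s" "s \<le> q"
      then have "s \<in> {u..v}" using sub by auto
      from has_field_derivative_subset[OF der[OF this] sub]
      show "(\<phi> has_derivative (\<lambda>h. \<phi>' s * h)) (at s within {p..q})"
        by (simp add: has_field_derivative_def)
    qed
    then obtain s where s: "s \<in> {p..q}" "\<phi> q - \<phi> p = \<phi>' s * (q - p)" by auto
    have "\<bar>\<phi>' s\<bar> \<le> K" using bd s sub by auto
    then show ?thesis using s \<open>p \<le> q\<close>
      by (simp add: abs_mult mult.commute mult_right_mono)
  qed
  show ?thesis
  proof (cases "z \<le> x")
    case True then show ?thesis using gen[of z x] x z by simp
  next
    case False then show ?thesis using gen[of x z] x z by (simp add: abs_minus_commute)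
  qed
qed

lemma rect_bound:
  fixes h h1 h12 :: "real \<Rightarrow> real \<Rightarrow> real" and a b c d M x y \<alpha> \<beta> :: real
  assumes h1: "\<And>x y. x \<in> {a..b} \<Longrightarrow> y \<in> {c..d} \<Longrightarrow>
               ((\<lambda>t. h t y) has_real_derivative h1 x y) (at x within {a..b})"
    and h12: "\<And>x y. x \<in> {a..b} \<Longrightarrow> y \<in> {c..d} \<Longrightarrow>
               ((\<lambda>t. h1 x t) has_real_derivative h12 x y) (at y within {c..d})"
    and M: "\<And>x y. x \<in> {a..b} \<Longrightarrow> y \<in> {c..d} \<Longrightarrow> \<bar>h12 x y\<bar> \<le> M"
    and x: "x \<in> {a..b}" and al: "\<alpha> \<in> {a..b}" and y: "y \<in> {c..d}" and be: "\<beta> \<in> {c..d}"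
  shows "\<bar>h x y - h \<alpha> y - h x \<beta> + h \<alpha> \<beta>\<bar> \<le> M * \<bar>x - \<alpha>\<bar> * \<bar>y - \<beta>\<bar>"
proof -
  have inner: "\<bar>h1 t y - h1 t \<beta>\<bar> \<le> M * \<bar>y - \<beta>\<bar>" if t: "t \<in> {a..b}" for t
    by (rule mvt_abs2[where \<phi>="\<lambda>s. h1 t s" and \<phi>'="\<lambda>s. h12 t s"])
       (use h12 M t y be in auto)
  have "\<bar>(h x y - h x \<beta>) - (h \<alpha> y - h \<alpha> \<beta>)\<bar> \<le> (M * \<bar>y - \<beta>\<bar>) * \<bar>x - \<alpha>\<bar>"
    by (rule mvt_abs2[where \<phi>="\<lambda>t. h t y - h t \<beta>" and \<phi>'="\<lambda>t. h1 t y - h1 t \<beta>"])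
       (use h1 inner x al y be in \<open>auto intro!: derivative_eq_intros\<close>)
  then show ?thesis by (simp add: algebra_simps)
qed

lemma P_bound:
  fixes h h1 h12 :: "real \<Rightarrow> real \<Rightarrow> real" and a b c d M x y :: real
  assumes "a < b" "c < d"
    and h1: "\<And>x y. x \<in> {a..b} \<Longrightarrow> y \<in> {c..d} \<Longrightarrow>
               ((\<lambda>t. h t y) has_real_derivative h1 x y) (at x within {a..b})"
    and h12: "\<And>x y. x \<in> {a..b} \<Longrightarrow> y \<in> {c..d} \<Longrightarrow>
               ((\<lambda>t. h1 x t) has_real_derivative h12 x y) (at y within {c..d})"
    and M: "\<And>x y. x \<in> {a..b} \<Longrightarrow> y \<in> {c..d} \<Longrightarrow> \<bar>h12 x y\<bar> \<le> M"
    and x: "x \<in> {a..b}" and y: "y \<in> {c..d}"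
  shows "\<bar>h x y - P_op a b c d h x y\<bar> \<le> (1/4) * M * (b - a) * (d - c)"
proof -
  have A: "a \<in> {a..b}" "b \<in> {a..b}" "c \<in> {c..d}" "d \<in> {c..d}" using assms by auto
  have rb: "\<bar>h x y - h \<alpha> y - h x \<beta> + h \<alpha> \<beta>\<bar> \<le> M * \<bar>x - \<alpha>\<bar> * \<bar>y - \<beta>\<bar>"
    if "\<alpha> \<in> {a..b}" "\<beta> \<in> {c..d}" for \<alpha> \<beta>
    by (rule rect_bound[where ?h1.0=h1 and ?h12.0=h12]) (use h1 h12 M x y that in auto)
  have e1: "\<bar>h x y - h a y - h x c + h a c\<bar> \<le> M * (x - a) * (y - c)"
    using rb[OF A(1) A(3)] x y by simp
  have e2: "\<bar>h x y - h a y - h x d + h a d\<bar> \<le> M * (x - a) * (d - y)"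
    using rb[OF A(1) A(4)] x y by (simp add: abs_minus_commute)
  have e3: "\<bar>h x y - h b y - h x c + h b c\<bar> \<le> M * (b - x) * (y - c)"
    using rb[OF A(2) A(3)] x y by (simp add: abs_minus_commute)
  have e4: "\<bar>h x y - h b y - h x d + h b d\<bar> \<le> M * (b - x) * (d - y)"
    using rb[OF A(2) A(4)] x y by (simp add: abs_minus_commute)
  have eq: "h x y - P_op a b c d h x y = (1/4) * ((h x y - h a y - h x c + h a c)
     + (h x y - h a y - h x d + h a d) + (h x y - h b y - h x c + h b c) + (h x y - h b y - h x d + h b d))"
    by (simp add: P_op_def algebra_simps)
  have "\<bar>h x y - P_op a b c d h x y\<bar> \<le> (1/4) * (M * (x - a) * (y - c) + M * (x - a) * (d - y)
      + M * (b - x) * (y - c) + M * (b - x) * (d - y))"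
    unfolding eq by (rule four_abs[OF e1 e2 e3 e4])
  also have "\<dots> = (1/4) * M * (b - a) * (d - c)" by (simp add: algebra_simps)
  finally show ?thesis .
qed

lemma sup_bound:
  fixes h :: "real \<Rightarrow> real \<Rightarrow> real" and a b c d :: real
  assumes "continuous_on ({a..b} \<times> {c..d}) (\<lambda>p. h (fst p) (snd p))"
    and "x \<in> {a..b}" "y \<in> {c..d}"
  shows "\<bar>h x y\<bar> \<le> sup_norm_rect a b c d h"
proof -
  have "continuous_on ({a..b} \<times> {c..d}) (\<lambda>p. \<bar>h (fst p) (snd p)\<bar>)"
    using assms(1) by (intro continuous_intros)
  then have "compact ((\<lambda>p. \<bar>h (fst p) (snd p)\<bar>) ` ({a..b} \<times> {c..d}))"
    by (intro compact_continuous_image compact_Times) auto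
  then have "bdd_above ((\<lambda>p. \<bar>h (fst p) (snd p)\<bar>) ` ({a..b} \<times> {c..d}))"
    by (intro bounded_imp_bdd_above compact_imp_bounded)
  then show ?thesis unfolding sup_norm_rect_def
    using cSUP_upper[of "(x,y)" "{a..b} \<times> {c..d}" "\<lambda>p. \<bar>h (fst p) (snd p)\<bar>"] assms by auto
qed

lemma cont_fix2:
  fixes h :: "real \<Rightarrow> real \<Rightarrow> real" and a b c d :: real
  assumes "continuous_on ({a..b} \<times> {c..d}) (\<lambda>p. h (fst p) (snd p))" "e \<in> {c..d}"
  shows "continuous_on ({a..b} \<times> {c..d}) (\<lambda>p. h (fst p) e)"
proof -
  have "(\<lambda>p. (fst p, e)) ` ({a..b} \<times> {c..d}) \<subseteq> {a..b} \<times> {c..d}" using assms(2) by auto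
  moreover have "continuous_on ({a..b} \<times> {c..d}) (\<lambda>p. (fst p, e))"
    by (intro continuous_intros)
  ultimately show ?thesis
    using continuous_on_compose2[OF assms(1), of "{a..b} \<times> {c..d}" "\<lambda>p. (fst p, e)"]
    by simp
qed

lemma cont_fix1:
  fixes h :: "real \<Rightarrow> real \<Rightarrow> real" and a b c d :: real
  assumes "continuous_on ({a..b} \<times> {c..d}) (\<lambda>p. h (fst p) (snd p))" "e \<in> {a..b}"
  shows "continuous_on ({a..b} \<times> {c..d}) (\<lambda>p. h e (snd p))"
proof -
  have "(\<lambda>p. (e, snd p)) ` ({a..b} \<times> {c..d}) \<subseteq> {a..b} \<times> {c..d}" using assms(2) by auto
  moreover have "continuous_on ({a..b} \<times> {c..d}) (\<lambda>p. (e, snd p))"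
    by (intro continuous_intros)
  ultimately show ?thesis
    using continuous_on_compose2[OF assms(1), of "{a..b} \<times> {c..d}" "\<lambda>p. (e, snd p)"]
    by simp
qed

lemma cont_P:
  fixes h :: "real \<Rightarrow> real \<Rightarrow> real" and a b c d :: real
  assumes "a < b" "c < d" "continuous_on ({a..b} \<times> {c..d}) (\<lambda>p. h (fst p) (snd p))"
  shows "continuous_on ({a..b} \<times> {c..d}) (\<lambda>p. P_op a b c d h (fst p) (snd p))"
  unfolding P_op_def
  using assms cont_fix1[OF assms(3), of a] cont_fix1[OF assms(3), of b]
    cont_fix2[OF assms(3), of c] cont_fix2[OF assms(3), of d]
  by (auto intro!: continuous_intros)

lemma double_int:
  fixes F :: "real \<Rightarrow> real \<Rightarrow> real" and a b c d :: real
  assumes "continuous_on ({a..b} \<times> {c..d}) (\<lambda>p. F (fst p) (snd p))"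
  shows "(\<lambda>x. integral {c..d} (F x)) integrable_on {a..b}"
    and "\<And>x. x \<in> {a..b} \<Longrightarrow> F x integrable_on {c..d}"
proof -
  have "continuous_on ({a..b} \<times> cbox c d) (\<lambda>(x, t). F x t)"
    using assms by (simp add: case_prod_beta box_real)
  from integral_continuous_on_param[OF this]
  show "(\<lambda>x. integral {c..d} (F x)) integrable_on {a..b}"
    by (intro integrable_continuous_real) simp
  fix x assume x: "x \<in> {a..b}"
  have s1: "(\<lambda>t. (x, t)) ` {c..d} \<subseteq> {a..b} \<times> {c..d}" using x by auto
  have s2: "continuous_on {c..d} (\<lambda>t. (x, t))" by (intro continuous_intros)
  have "continuous_on {c..d} (F x)"
    using continuous_on_compose2[OF assms s2 s1] by simp
  then show "F x integrable_on {c..d}" by (intro integrable_continuous_real)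
qed

theorem corollary2p1:
  fixes a b c d :: real
    and f g f1 f2 f12 g1 g2 g12 :: "real \<Rightarrow> real \<Rightarrow> real"
  assumes "a < b" and "c < d"
    and f_cont: "continuous_on ({a..b} \<times> {c..d}) (\<lambda>p. f (fst p) (snd p))"
    and g_cont: "continuous_on ({a..b} \<times> {c..d}) (\<lambda>p. g (fst p) (snd p))"
    and f1: "\<And>x y. x \<in> {a..b} \<Longrightarrow> y \<in> {c..d} \<Longrightarrow>
               ((\<lambda>t. f t y) has_real_derivative f1 x y) (at x within {a..b})"
    and f2: "\<And>x y. x \<in> {a..b} \<Longrightarrow> y \<in> {c..d} \<Longrightarrow>
               ((\<lambda>t. f x t) has_real_derivative f2 x y) (at y within {c..d})"
    and f12: "\<And>x y. x \<in> {a..b} \<Longrightarrow> y \<in> {c..d} \<Longrightarrow>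
               ((\<lambda>t. f1 x t) has_real_derivative f12 x y) (at y within {c..d})"
    and g1: "\<And>x y. x \<in> {a..b} \<Longrightarrow> y \<in> {c..d} \<Longrightarrow>
               ((\<lambda>t. g t y) has_real_derivative g1 x y) (at x within {a..b})"
    and g2: "\<And>x y. x \<in> {a..b} \<Longrightarrow> y \<in> {c..d} \<Longrightarrow>
               ((\<lambda>t. g x t) has_real_derivative g2 x y) (at y within {c..d})"
    and g12: "\<And>x y. x \<in> {a..b} \<Longrightarrow> y \<in> {c..d} \<Longrightarrow>
               ((\<lambda>t. g1 x t) has_real_derivative g12 x y) (at y within {c..d})"
    and f1_cont: "continuous_on ({a..b} \<times> {c..d}) (\<lambda>p. f1 (fst p) (snd p))"
    and f2_cont: "continuous_on ({a..b} \<times> {c..d}) (\<lambda>p. f2 (fst p) (snd p))"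
    and f12_cont: "continuous_on ({a..b} \<times> {c..d}) (\<lambda>p. f12 (fst p) (snd p))"
    and g1_cont: "continuous_on ({a..b} \<times> {c..d}) (\<lambda>p. g1 (fst p) (snd p))"
    and g2_cont: "continuous_on ({a..b} \<times> {c..d}) (\<lambda>p. g2 (fst p) (snd p))"
    and g12_cont: "continuous_on ({a..b} \<times> {c..d}) (\<lambda>p. g12 (fst p) (snd p))"
  shows "\<bar>integral {a..b} (\<lambda>x. integral {c..d} (\<lambda>y.
            f x y * g x y
            - (1/2) * (P_op a b c d f x y * g x y + P_op a b c d g x y * f x y)))\<bar>
         \<le> (1/8) * (b - a) * (d - c) *
           integral {a..b} (\<lambda>x. integral {c..d} (\<lambda>y.
             \<bar>g x y\<bar> * sup_norm_rect a b c d f12 + \<bar>f x y\<bar> * sup_norm_rect a b c d g12))"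
proof -
  define Mf where "Mf = sup_norm_rect a b c d f12"
  define Mg where "Mg = sup_norm_rect a b c d g12"
  define F where "F x y = f x y * g x y
            - (1/2) * (P_op a b c d f x y * g x y + P_op a b c d g x y * f x y)" for x y
  define B where "B x y = (1/8) * (b - a) * (d - c) * (\<bar>g x y\<bar> * Mf + \<bar>f x y\<bar> * Mg)" for x y
  have Fc: "continuous_on ({a..b} \<times> {c..d}) (\<lambda>p. F (fst p) (snd p))"
    unfolding F_def using f_cont g_cont cont_P[OF assms(1,2) f_cont] cont_P[OF assms(1,2) g_cont]
    by (intro continuous_intros)
  have Bc: "continuous_on ({a..b} \<times> {c..d}) (\<lambda>p. B (fst p) (snd p))"
    unfolding B_def using f_cont g_cont by (intro continuous_intros)
  have pw: "\<bar>F x y\<bar> \<le> B x y" if x: "x \<in> {a..b}" and y: "y \<in> {c..d}" for x y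
  proof -
    have bf: "\<bar>f x y - P_op a b c d f x y\<bar> \<le> (1/4) * Mf * (b - a) * (d - c)"
      unfolding Mf_def
      by (rule P_bound[OF assms(1,2) f1 f12 sup_bound[OF f12_cont] x y])
    have bg: "\<bar>g x y - P_op a b c d g x y\<bar> \<le> (1/4) * Mg * (b - a) * (d - c)"
      unfolding Mg_def
      by (rule P_bound[OF assms(1,2) g1 g12 sup_bound[OF g12_cont] x y])
    have eq: "F x y = (1/2) * ((f x y - P_op a b c d f x y) * g x y + (g x y - P_op a b c d g x y) * f x y)"
      unfolding F_def by (simp add: algebra_simps)
    have m1: "\<bar>(f x y - P_op a b c d f x y) * g x y\<bar> \<le> ((1/4) * Mf * (b - a) * (d - c)) * \<bar>g x y\<bar>"
      unfolding abs_mult by (rule mult_right_mono[OF bf]) simp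
    have m2: "\<bar>(g x y - P_op a b c d g x y) * f x y\<bar> \<le> ((1/4) * Mg * (b - a) * (d - c)) * \<bar>f x y\<bar>"
      unfolding abs_mult by (rule mult_right_mono[OF bg]) simp
    have "\<bar>F x y\<bar> \<le> (1/2) * (((1/4) * Mf * (b - a) * (d - c)) * \<bar>g x y\<bar>
        + ((1/4) * Mg * (b - a) * (d - c)) * \<bar>f x y\<bar>)"
    proof -
      have "\<bar>F x y\<bar> \<le> (1/2) * (\<bar>(f x y - P_op a b c d f x y) * g x y\<bar> + \<bar>(g x y - P_op a b c d g x y) * f x y\<bar>)"
        unfolding eq abs_mult
        using abs_triangle_ineq[of "(f x y - P_op a b c d f x y) * g x y" "(g x y - P_op a b c d g x y) * f x y"]
        by (simp add: abs_mult)
      then show ?thesis by (rule two_abs[OF _ m1 m2])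
    qed
    also have "\<dots> = B x y" unfolding B_def by (simp add: field_simps)
    finally show ?thesis .
  qed
  have "\<bar>integral {a..b} (\<lambda>x. integral {c..d} (F x))\<bar> \<le> integral {a..b} (\<lambda>x. integral {c..d} (B x))"
    using integral_norm_bound_integral[OF double_int(1)[OF Fc] double_int(1)[OF Bc]]
      integral_norm_bound_integral[OF double_int(2)[OF Fc] double_int(2)[OF Bc]] pw
    by auto
  also have "\<dots> = (1/8) * (b - a) * (d - c) * integral {a..b} (\<lambda>x. integral {c..d} (\<lambda>y.
             \<bar>g x y\<bar> * Mf + \<bar>f x y\<bar> * Mg))"
    unfolding B_def by simp
  finally show ?thesis unfolding F_def Mf_def Mg_def by simp
qed

end
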